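(* If the communication graph of a system is a simple chain (a path graph) of $n\ge2$ trajectories, then its isolation-resilience is $n-2$.
   Context: Model. A system consists of pairwise disjoint unit circles $C_1,\dots,C_n$ in the plane (trajectories) and a communication range $r>0$. Its communication graph $G$ has vertex set $\{C_1,\dots,C_n\}$, $C_i,C_j$ adjacent iff the distance between their centres is at most $2+r$ (the circles need not lie on a straight line). Positions on a circle are angles (mod $2\pi$). For an edge $(i,j)$, the link position $\phi_{ij}$ is the angle of the point of $C_i$ closest to $C_j$. A schedule $F=(f,g)$ assigns each circle a starting angle $f(C_i)$ and direction $g(C_i)\in\{1,-1\}$; a robot following it on $C_i$ is at $f(C_i)+g(C_i)2\pi t$ at time $t$. $F$ is a synchronization schedule if $g(C_i)=-g(C_j)$ for adjacent circles and robots following $F$ on adjacent $C_i,C_j$ are at $\phi_{ij},\phi_{ji}$ at exactly the same times. A synchronized communication system (SCS) consists of $n$ robots, initially one per circle, following a synchronization schedule, with the switching rule: when a robot on $C_i$ reaches $\phi_{ij}$ and $C_j$ is empty, it instantly passes to $C_j$ and follows the schedule of $C_j$; if $C_j$ has a robot, they meet and each stays on its circle. A partial SCS arises by letting some robots leave (possibly at different times); remaining robots never leave. A surviving robot $u$ starves if every time $u$ arrives at a link position $\phi_{ij}$ of its current circle $C_i$, the circle $C_j$ is empty; the system is in starvation state if all surviving robots starve. The isolation-resilience is the largest $k$ such that, whichever $k$ robots leave, the system does not fall into starvation state. *)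

theory Defs
  imports Complex_Main
begin

text \<open>A system: circles (trajectories) C_0,...,C_(n-1) with centres c i (in the complex
plane, radius 1), communication range r. Robot u (u < n) starts on circle u.\<close>

definition valid_system :: "nat \<Rightarrow> real \<Rightarrow> (nat \<Rightarrow> complex) \<Rightarrow> bool" where
  "valid_system n r c \<longleftrightarrow> r > 0 \<and> (\<forall>i<n. \<forall>j<n. i \<noteq> j \<longrightarrow> cmod (c i - c j) > 2)"

definition adj :: "nat \<Rightarrow> real \<Rightarrow> (nat \<Rightarrow> complex) \<Rightarrow> nat \<Rightarrow> nat \<Rightarrow> bool" where
  "adj n r c i j \<longleftrightarrow> i < n \<and> j < n \<and> i \<noteq> j \<and> cmod (c i - c j) \<le> 2 + r"

definition is_path_graph :: "nat \<Rightarrow> real \<Rightarrow> (nat \<Rightarrow> complex) \<Rightarrow> bool" where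
  "is_path_graph n r c \<longleftrightarrow> (\<exists>\<sigma>. bij_betw \<sigma> {..<n} {..<n} \<and>
     (\<forall>i<n. \<forall>j<n. adj n r c i j \<longleftrightarrow> (\<sigma> i = Suc (\<sigma> j) \<or> \<sigma> j = Suc (\<sigma> i))))"

text \<open>Angle of a robot following schedule (f,g) on circle i at time t.\<close>
definition robot_pos :: "(nat \<Rightarrow> real) \<Rightarrow> (nat \<Rightarrow> int) \<Rightarrow> nat \<Rightarrow> real \<Rightarrow> real" where
  "robot_pos f g i t = f i + of_int (g i) * 2 * pi * t"

text \<open>A robot on C_i at time t is at the link position phi_ij, i.e. at the point of C_i
closest to C_j, which is c i + sgn (c j - c i).\<close>
definition at_link :: "(nat \<Rightarrow> complex) \<Rightarrow> (nat \<Rightarrow> real) \<Rightarrow> (nat \<Rightarrow> int) \<Rightarrow> nat \<Rightarrow> nat \<Rightarrow> real \<Rightarrow> bool" where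
  "at_link c f g i j t \<longleftrightarrow> cis (robot_pos f g i t) = sgn (c j - c i)"

definition sync_schedule :: "nat \<Rightarrow> real \<Rightarrow> (nat \<Rightarrow> complex) \<Rightarrow> (nat \<Rightarrow> real) \<Rightarrow> (nat \<Rightarrow> int) \<Rightarrow> bool" where
  "sync_schedule n r c f g \<longleftrightarrow> (\<forall>i<n. g i = 1 \<or> g i = -1) \<and>
     (\<forall>i j. adj n r c i j \<longrightarrow> g i = - g j \<and> (\<forall>t. at_link c f g i j t \<longleftrightarrow> at_link c f g j i t))"

definition event_times :: "nat \<Rightarrow> real \<Rightarrow> (nat \<Rightarrow> complex) \<Rightarrow> (nat \<Rightarrow> real) \<Rightarrow> (nat \<Rightarrow> int) \<Rightarrow> real set" where
  "event_times n r c f g = {t. 0 \<le> t \<and> (\<exists>i j. adj n r c i j \<and> at_link c f g i j t)}"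

fun ev_time :: "nat \<Rightarrow> real \<Rightarrow> (nat \<Rightarrow> complex) \<Rightarrow> (nat \<Rightarrow> real) \<Rightarrow> (nat \<Rightarrow> int) \<Rightarrow> nat \<Rightarrow> real" where
  "ev_time n r c f g 0 = Inf (event_times n r c f g)"
| "ev_time n r c f g (Suc k) = Inf {t \<in> event_times n r c f g. ev_time n r c f g k < t}"

text \<open>Leaving: leave u = None means robot u never leaves; leave u = Some s means it is
gone from time s on.\<close>
definition present :: "(nat \<Rightarrow> real option) \<Rightarrow> nat \<Rightarrow> real \<Rightarrow> bool" where
  "present leave u t \<longleftrightarrow> (case leave u of None \<Rightarrow> True | Some s \<Rightarrow> t < s)"

text \<open>Switching rule applied at time t to the configuration S (robot \<mapsto> circle).\<close>
definition step :: "nat \<Rightarrow> real \<Rightarrow> (nat \<Rightarrow> complex) \<Rightarrow> (nat \<Rightarrow> real) \<Rightarrow> (nat \<Rightarrow> int)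
    \<Rightarrow> (nat \<Rightarrow> real option) \<Rightarrow> real \<Rightarrow> (nat \<Rightarrow> nat) \<Rightarrow> (nat \<Rightarrow> nat)" where
  "step n r c f g leave t S = (\<lambda>u.
     if present leave u t \<and> (\<exists>j. adj n r c (S u) j \<and> at_link c f g (S u) j t \<and>
                               (\<forall>v<n. present leave v t \<longrightarrow> S v \<noteq> j))
     then (SOME j. adj n r c (S u) j \<and> at_link c f g (S u) j t \<and>
                   (\<forall>v<n. present leave v t \<longrightarrow> S v \<noteq> j))
     else S u)"

text \<open>config k = configuration just before the k-th event time.\<close>
fun config :: "nat \<Rightarrow> real \<Rightarrow> (nat \<Rightarrow> complex) \<Rightarrow> (nat \<Rightarrow> real) \<Rightarrow> (nat \<Rightarrow> int)
    \<Rightarrow> (nat \<Rightarrow> real option) \<Rightarrow> nat \<Rightarrow> (nat \<Rightarrow> nat)" where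
  "config n r c f g leave 0 = (\<lambda>u. u)"
| "config n r c f g leave (Suc k) =
     step n r c f g leave (ev_time n r c f g k) (config n r c f g leave k)"

definition starves_from :: "nat \<Rightarrow> real \<Rightarrow> (nat \<Rightarrow> complex) \<Rightarrow> (nat \<Rightarrow> real) \<Rightarrow> (nat \<Rightarrow> int)
    \<Rightarrow> (nat \<Rightarrow> real option) \<Rightarrow> nat \<Rightarrow> nat \<Rightarrow> bool" where
  "starves_from n r c f g leave K u \<longleftrightarrow>
     (\<forall>k\<ge>K. \<forall>j. adj n r c (config n r c f g leave k u) j \<and>
                 at_link c f g (config n r c f g leave k u) j (ev_time n r c f g k) \<longrightarrow>
                 (\<forall>v<n. present leave v (ev_time n r c f g k) \<longrightarrow> config n r c f g leave k v \<noteq> j))"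

definition starvation :: "nat \<Rightarrow> real \<Rightarrow> (nat \<Rightarrow> complex) \<Rightarrow> (nat \<Rightarrow> real) \<Rightarrow> (nat \<Rightarrow> int)
    \<Rightarrow> (nat \<Rightarrow> real option) \<Rightarrow> bool" where
  "starvation n r c f g leave \<longleftrightarrow>
     (\<exists>K. \<forall>u<n. leave u = None \<longrightarrow> starves_from n r c f g leave K u)"

definition resilient_for :: "nat \<Rightarrow> real \<Rightarrow> (nat \<Rightarrow> complex) \<Rightarrow> (nat \<Rightarrow> real) \<Rightarrow> (nat \<Rightarrow> int) \<Rightarrow> nat \<Rightarrow> bool" where
  "resilient_for n r c f g k \<longleftrightarrow>
     (\<forall>leave. (\<forall>u. leave u \<noteq> None \<longrightarrow> u < n) \<and> card {u. leave u \<noteq> None} = k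
              \<longrightarrow> \<not> starvation n r c f g leave)"

definition isolation_resilience :: "nat \<Rightarrow> real \<Rightarrow> (nat \<Rightarrow> complex) \<Rightarrow> (nat \<Rightarrow> real) \<Rightarrow> (nat \<Rightarrow> int) \<Rightarrow> nat" where
  "isolation_resilience n r c f g = (GREATEST k. k \<le> n \<and> resilient_for n r c f g k)"

end

theory Submission
  imports Defs
begin

lemma cis_eq_iff_int: "cis x = cis y \<longleftrightarrow> (\<exists>m::int. x = y + 2 * pi * m)"
proof -
  have "cis x = cis y \<longleftrightarrow> sin x = sin y \<and> cos x = cos y"
    by (auto simp add: complex_eq_iff)
  also have "\<dots> \<longleftrightarrow> (\<exists>m::int. x = y + 2 * pi * m)" by (rule sin_cos_eq_iff)
  finally show ?thesis .
qed

lemma pm_int_aux: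
  fixes gg :: int and s s0 :: real
  assumes "gg = 1 \<or> gg = -1"
  shows "(\<exists>m::int. of_int gg * 2 * pi * s = of_int gg * 2 * pi * s0 + 2 * pi * m) \<longleftrightarrow> s - s0 \<in> \<int>"
proof
  assume "\<exists>m::int. of_int gg * 2 * pi * s = of_int gg * 2 * pi * s0 + 2 * pi * m"
  then obtain m :: int where m: "of_int gg * 2 * pi * s = of_int gg * 2 * pi * s0 + 2 * pi * m" by blast
  hence "2 * pi * (of_int gg * (s - s0)) = 2 * pi * m" by (simp add: algebra_simps)
  hence "of_int gg * (s - s0) = m" using pi_gt_zero by simp
  hence "s - s0 = of_int (gg * m)" using assms by (auto simp: algebra_simps)
  thus "s - s0 \<in> \<int>" by simp
next
  assume "s - s0 \<in> \<int>"
  then obtain m :: int where "s - s0 = of_int m" by (auto elim: Ints_cases)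
  hence "of_int gg * 2 * pi * s = of_int gg * 2 * pi * s0 + 2 * pi * of_int (gg * m)"
    using assms by (auto simp: algebra_simps)
  thus "\<exists>m::int. of_int gg * 2 * pi * s = of_int gg * 2 * pi * s0 + 2 * pi * m" by blast
qed

lemma link_form_gen:
  assumes "gg = 1 \<or> gg = -1" and "w \<noteq> 0"
  shows "\<exists>a. \<forall>s. cis (ff + of_int gg * 2 * pi * s) = sgn w \<longleftrightarrow> s - a \<in> \<int>"
proof -
  define a where "a = (Arg w - ff) / (of_int gg * 2 * pi)"
  have gne: "(of_int gg :: real) \<noteq> 0" using assms(1) by auto
  have ea: "ff + of_int gg * 2 * pi * a = Arg w" using gne pi_gt_zero unfolding a_def by (simp add: field_simps)
  have "\<forall>s. cis (ff + of_int gg * 2 * pi * s) = sgn w \<longleftrightarrow> s - a \<in> \<int>"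
  proof
    fix s
    have "cis (ff + of_int gg * 2 * pi * s) = sgn w \<longleftrightarrow> cis (ff + of_int gg * 2 * pi * s) = cis (ff + of_int gg * 2 * pi * a)"
      using ea cis_Arg[OF assms(2)] by simp
    also have "\<dots> \<longleftrightarrow> (\<exists>m::int. ff + of_int gg * 2 * pi * s = ff + of_int gg * 2 * pi * a + 2 * pi * m)"
      by (rule cis_eq_iff_int)
    also have "\<dots> \<longleftrightarrow> (\<exists>m::int. of_int gg * 2 * pi * s = of_int gg * 2 * pi * a + 2 * pi * m)"
      by (simp add: algebra_simps)
    also have "\<dots> \<longleftrightarrow> s - a \<in> \<int>" by (rule pm_int_aux[OF assms(1)])
    finally show "cis (ff + of_int gg * 2 * pi * s) = sgn w \<longleftrightarrow> s - a \<in> \<int>" .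
  qed
  thus ?thesis by blast
qed

locale PS =
  fixes n :: nat and r :: real and c :: "nat \<Rightarrow> complex"
    and f :: "nat \<Rightarrow> real" and g :: "nat \<Rightarrow> int" and \<sigma> :: "nat \<Rightarrow> nat"
  assumes n2: "2 \<le> n" and vs: "valid_system n r c" and ss: "sync_schedule n r c f g"
    and bij: "bij_betw \<sigma> {..<n} {..<n}"
    and adj\<sigma>: "\<forall>i<n. \<forall>j<n. adj n r c i j \<longleftrightarrow> (\<sigma> i = Suc (\<sigma> j) \<or> \<sigma> j = Suc (\<sigma> i))"
begin

lemma adjD: "adj n r c i j \<Longrightarrow> i < n \<and> j < n \<and> i \<noteq> j"
  by (simp add: adj_def)

lemma adj_sym: "adj n r c i j \<Longrightarrow> adj n r c j i"
  by (auto simp: adj_def norm_minus_commute)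

lemma adj_iff: "i < n \<Longrightarrow> j < n \<Longrightarrow> adj n r c i j \<longleftrightarrow> (\<sigma> i = Suc (\<sigma> j) \<or> \<sigma> j = Suc (\<sigma> i))"
  using adj\<sigma> by blast

lemma sig_lt: "i < n \<Longrightarrow> \<sigma> i < n"
  using bij by (auto simp: bij_betw_def)

lemma sig_inj: "i < n \<Longrightarrow> j < n \<Longrightarrow> \<sigma> i = \<sigma> j \<Longrightarrow> i = j"
  using bij by (auto simp: bij_betw_def inj_on_def)

lemma sig_surj: "p < n \<Longrightarrow> \<exists>i<n. \<sigma> i = p"
proof -
  assume "p < n"
  hence "p \<in> \<sigma> ` {..<n}" using bij unfolding bij_betw_def by simp
  thus ?thesis by auto
qed

lemma gpm: "i < n \<Longrightarrow> g i = 1 \<or> g i = -1"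
  using ss by (simp add: sync_schedule_def)

lemma sync: "adj n r c i j \<Longrightarrow> at_link c f g i j t \<longleftrightarrow> at_link c f g j i t"
  using ss unfolding sync_schedule_def by blast

lemma cne: "i < n \<Longrightarrow> j < n \<Longrightarrow> i \<noteq> j \<Longrightarrow> c j - c i \<noteq> 0"
  using vs unfolding valid_system_def by force

lemma link_form: "adj n r c i j \<Longrightarrow> \<exists>a. \<forall>s. at_link c f g i j s \<longleftrightarrow> s - a \<in> \<int>"
  unfolding at_link_def robot_pos_def
  using link_form_gen[OF gpm cne] adjD by blast

lemma link_shift: "adj n r c i j \<Longrightarrow> at_link c f g i j s \<Longrightarrow> at_link c f g i j (s + 1)"
proof -
  assume a: "adj n r c i j" "at_link c f g i j s"
  obtain a0 where h: "\<forall>s. at_link c f g i j s \<longleftrightarrow> s - a0 \<in> \<int>" using link_form[OF a(1)] by blast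
  have "s - a0 \<in> \<int>" using h a(2) by blast
  hence "(s - a0) + 1 \<in> \<int>" by (intro Ints_add) auto
  hence "s + 1 - a0 \<in> \<int>" by (simp add: algebra_simps)
  thus ?thesis using h by blast
qed

lemma link_diff: "adj n r c i j \<Longrightarrow> at_link c f g i j s \<Longrightarrow> at_link c f g i j s' \<Longrightarrow> s - s' \<in> \<int>"
proof -
  assume a: "adj n r c i j" "at_link c f g i j s" "at_link c f g i j s'"
  obtain a0 where h: "\<forall>s. at_link c f g i j s \<longleftrightarrow> s - a0 \<in> \<int>" using link_form[OF a(1)] by blast
  have "s - a0 \<in> \<int>" "s' - a0 \<in> \<int>" using h a(2,3) by auto
  hence "(s - a0) - (s' - a0) \<in> \<int>" by (rule Ints_diff)
  thus ?thesis by simp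
qed

lemma link_next: "adj n r c i j \<Longrightarrow> \<exists>s. t < s \<and> s \<le> t + 1 \<and> at_link c f g i j s"
proof -
  assume a: "adj n r c i j"
  obtain a0 where h: "\<forall>s. at_link c f g i j s \<longleftrightarrow> s - a0 \<in> \<int>" using link_form[OF a] by blast
  define s where "s = a0 + of_int (\<lfloor>t - a0\<rfloor>) + 1"
  have "t < s" "s \<le> t + 1" unfolding s_def by linarith+
  moreover have "s - a0 \<in> \<int>" unfolding s_def by simp
  ultimately show ?thesis using h by blast
qed

lemma link_fin: "adj n r c i j \<Longrightarrow> finite {s. at_link c f g i j s \<and> x \<le> s \<and> s \<le> y}"
proof -
  assume a: "adj n r c i j"
  obtain a0 where h: "\<forall>s. at_link c f g i j s \<longleftrightarrow> s - a0 \<in> \<int>" using link_form[OF a] by blast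
  have "{s. at_link c f g i j s \<and> x \<le> s \<and> s \<le> y} \<subseteq> (\<lambda>m. a0 + of_int m) ` {\<lceil>x - a0\<rceil>..\<lfloor>y - a0\<rfloor>}"
  proof
    fix s assume "s \<in> {s. at_link c f g i j s \<and> x \<le> s \<and> s \<le> y}"
    hence s: "s - a0 \<in> \<int>" "x \<le> s" "s \<le> y" using h by auto
    then obtain m where m: "s - a0 = of_int m" by (auto elim: Ints_cases)
    have "\<lceil>x - a0\<rceil> \<le> m" using m s by (simp add: ceiling_le_iff)
    moreover have "m \<le> \<lfloor>y - a0\<rfloor>" using m s by (simp add: le_floor_iff)
    ultimately show "s \<in> (\<lambda>m. a0 + of_int m) ` {\<lceil>x - a0\<rceil>..\<lfloor>y - a0\<rfloor>}"
      using m by (auto intro!: image_eqI[where x=m])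
  qed
  thus ?thesis by (rule finite_subset) auto
qed

lemma degree: "adj n r c i a \<Longrightarrow> adj n r c i b \<Longrightarrow> adj n r c i d \<Longrightarrow> a \<noteq> b \<Longrightarrow> a \<noteq> d \<Longrightarrow> b = d"
proof -
  assume h: "adj n r c i a" "adj n r c i b" "adj n r c i d" "a \<noteq> b" "a \<noteq> d"
  have lt: "i < n" "a < n" "b < n" "d < n" using h adjD by auto
  have "\<sigma> a \<noteq> \<sigma> b" "\<sigma> a \<noteq> \<sigma> d" using h(4,5) sig_inj lt by auto
  moreover have "\<sigma> i = Suc (\<sigma> a) \<or> \<sigma> a = Suc (\<sigma> i)" "\<sigma> i = Suc (\<sigma> b) \<or> \<sigma> b = Suc (\<sigma> i)"
    "\<sigma> i = Suc (\<sigma> d) \<or> \<sigma> d = Suc (\<sigma> i)" using h(1-3) adj_iff lt by auto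
  ultimately have "\<sigma> b = \<sigma> d" by arith
  thus ?thesis using sig_inj lt by auto
qed

lemma excl: "adj n r c i j \<Longrightarrow> adj n r c i j' \<Longrightarrow> j \<noteq> j' \<Longrightarrow> at_link c f g i j t \<Longrightarrow> at_link c f g i j' t \<Longrightarrow> False"
proof -
  assume h: "adj n r c i j" "adj n r c i j'" "j \<noteq> j'" "at_link c f g i j t" "at_link c f g i j' t"
  have lt: "i < n" "j < n" "j' < n" "i \<noteq> j" "i \<noteq> j'" using h adjD by auto
  define w where "w = sgn (c j - c i)"
  have w2: "sgn (c j' - c i) = w" using h(4,5) unfolding at_link_def w_def by simp
  define d1 where "d1 = cmod (c j - c i)"
  define d2 where "d2 = cmod (c j' - c i)"
  have e1: "c j - c i = of_real d1 * w" unfolding d1_def w_def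
    using cne[of i j] lt by (simp add: sgn_eq)
  have e2: "c j' - c i = of_real d2 * w" unfolding d2_def w2[symmetric]
    using cne[of i j'] lt by (simp add: sgn_eq)
  have wn: "cmod w = 1" unfolding w_def using cne[of i j] lt by (simp add: norm_sgn)
  have "c j - c j' = of_real (d1 - d2) * w" using e1 e2 by (simp add: algebra_simps)
  hence "cmod (c j - c j') = cmod (of_real (d1 - d2) * w)" by (simp only:)
  also have "\<dots> = \<bar>d1 - d2\<bar>" by (simp only: norm_mult norm_of_real wn) simp
  finally have "cmod (c j - c j') = \<bar>d1 - d2\<bar>" .
  moreover have "d1 \<le> 2 + r" "d2 \<le> 2 + r" "0 \<le> d1" "0 \<le> d2"
    using h(1,2) unfolding d1_def d2_def adj_def by (auto simp: norm_minus_commute)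
  ultimately have "cmod (c j - c j') \<le> 2 + r" by linarith
  hence "adj n r c j j'" using lt h(3) by (simp add: adj_def)
  hence "\<sigma> j = Suc (\<sigma> j') \<or> \<sigma> j' = Suc (\<sigma> j)" using adj_iff lt by auto
  moreover have "\<sigma> i = Suc (\<sigma> j) \<or> \<sigma> j = Suc (\<sigma> i)" "\<sigma> i = Suc (\<sigma> j') \<or> \<sigma> j' = Suc (\<sigma> i)"
    using h(1,2) adj_iff lt by auto
  moreover have "\<sigma> j \<noteq> \<sigma> j'" using sig_inj lt h(3) by auto
  ultimately show False by arith
qed

abbreviation "E \<equiv> event_times n r c f g"
abbreviation "ev \<equiv> ev_time n r c f g"

lemma E_nonneg: "t \<in> E \<Longrightarrow> 0 \<le> t"
  by (simp add: event_times_def)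

lemma E_unbounded: "\<exists>t\<in>E. x < t"
proof -
  have "0 < n" "1 < n" using n2 by auto
  obtain i0 where i0: "i0 < n" "\<sigma> i0 = 0" using sig_surj[OF \<open>0 < n\<close>] by blast
  obtain j0 where j0: "j0 < n" "\<sigma> j0 = 1" using sig_surj[OF \<open>1 < n\<close>] by blast
  have a: "adj n r c i0 j0" using adj_iff i0 j0 by auto
  obtain s where s: "max x 0 < s" "at_link c f g i0 j0 s" using link_next[OF a, of "max x 0"] by blast
  hence "s \<in> E" using a unfolding event_times_def by auto
  thus ?thesis using s by auto
qed

lemma E_fin: "finite {t\<in>E. t \<le> y}"
proof -
  have "{t\<in>E. t \<le> y} \<subseteq> (\<Union>i\<in>{..<n}. \<Union>j\<in>{..<n}. {s. adj n r c i j \<and> at_link c f g i j s \<and> 0 \<le> s \<and> s \<le> y})"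
  proof
    fix t assume "t \<in> {t\<in>E. t \<le> y}"
    then obtain i j where "adj n r c i j" "at_link c f g i j t" "0 \<le> t" "t \<le> y"
      unfolding event_times_def by auto
    moreover have "i < n" "j < n" using adjD[OF calculation(1)] by auto
    ultimately show "t \<in> (\<Union>i\<in>{..<n}. \<Union>j\<in>{..<n}. {s. adj n r c i j \<and> at_link c f g i j s \<and> 0 \<le> s \<and> s \<le> y})"
      by (intro UN_I[of i] UN_I[of j]) auto
  qed
  moreover have "finite {s. adj n r c i j \<and> at_link c f g i j s \<and> 0 \<le> s \<and> s \<le> y}" for i j
  proof (cases "adj n r c i j")
    case True
    thus ?thesis using link_fin[OF True, of 0 y] by simp
  next
    case False
    thus ?thesis by simp
  qed
  hence "finite (\<Union>i\<in>{..<n}. \<Union>j\<in>{..<n}. {s. adj n r c i j \<and> at_link c f g i j s \<and> 0 \<le> s \<and> s \<le> y})"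
    by (intro finite_UN_I finite_lessThan)
  ultimately show ?thesis by (rule finite_subset)
qed

lemma Inf_min: "Y \<subseteq> E \<Longrightarrow> Y \<noteq> {} \<Longrightarrow> Inf Y \<in> Y \<and> (\<forall>y\<in>Y. Inf Y \<le> y)"
proof -
  assume Y: "Y \<subseteq> E" "Y \<noteq> {}"
  obtain y0 where y0: "y0 \<in> Y" using Y by blast
  define F where "F = {y\<in>Y. y \<le> y0}"
  have "F \<subseteq> {t\<in>E. t \<le> y0}" using Y unfolding F_def by auto
  hence fF: "finite F" using E_fin finite_subset by blast
  have nF: "y0 \<in> F" unfolding F_def using y0 by auto
  define m where "m = Min F"
  have mF: "m \<in> F" unfolding m_def using fF nF by (intro Min_in) auto
  have ml: "\<forall>y\<in>Y. m \<le> y"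
  proof
    fix y assume y: "y \<in> Y"
    show "m \<le> y"
    proof (cases "y \<le> y0")
      case True
      hence "y \<in> F" using y unfolding F_def by auto
      thus ?thesis unfolding m_def using fF by simp
    next
      case False
      have "m \<le> y0" unfolding m_def using fF nF by simp
      thus ?thesis using False by simp
    qed
  qed
  have mY: "m \<in> Y" using mF unfolding F_def by auto
  have "Inf Y = m" by (rule cInf_eq_minimum[OF mY]) (use ml in auto)
  thus ?thesis using mY ml by simp
qed

lemma ev0: "ev 0 \<in> E \<and> (\<forall>t\<in>E. ev 0 \<le> t)"
proof -
  have "E \<noteq> {}" using E_unbounded by blast
  thus ?thesis using Inf_min[of E] by simp
qed

lemma evS: "ev (Suc k) \<in> E \<and> ev k < ev (Suc k) \<and> (\<forall>t\<in>E. ev k < t \<longrightarrow> ev (Suc k) \<le> t)"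
proof -
  have "{t \<in> E. ev k < t} \<noteq> {}" using E_unbounded by blast
  thus ?thesis using Inf_min[of "{t \<in> E. ev k < t}"] by auto
qed

lemma evE: "ev k \<in> E"
  by (cases k) (use ev0 evS in auto)

lemma ev_mono: "strict_mono ev"
  using evS by (simp add: strict_mono_Suc_iff)

lemma ev_less_iff: "ev k < ev k' \<longleftrightarrow> k < k'"
  using ev_mono by (simp add: strict_mono_less)

lemma ev_le_iff: "ev k \<le> ev k' \<longleftrightarrow> k \<le> k'"
  using ev_mono by (simp add: strict_mono_less_eq)

lemma ev_nonneg: "0 \<le> ev k"
  using evE E_nonneg by blast

lemma ev_surj: "t \<in> E \<Longrightarrow> \<exists>k. ev k = t"
proof -
  assume t: "t \<in> E"
  define KS where "KS = {k. ev k \<le> t}"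
  have "ev ` KS \<subseteq> {t'\<in>E. t' \<le> t}" unfolding KS_def using evE by auto
  hence "finite (ev ` KS)" using E_fin by (rule finite_subset)
  moreover have "inj_on ev KS" using ev_mono strict_mono_imp_inj_on by blast
  ultimately have fK: "finite KS" using finite_image_iff by blast
  have "0 \<in> KS" unfolding KS_def using ev0 t by auto
  define k where "k = Max KS"
  have kK: "k \<in> KS" unfolding k_def using fK \<open>0 \<in> KS\<close> by (intro Max_in) auto
  have "Suc k \<notin> KS" by (metis Max_ge fK k_def Suc_n_not_le_n)
  hence lt: "t < ev (Suc k)" unfolding KS_def by simp
  have le: "ev k \<le> t" using kK unfolding KS_def by simp
  show ?thesis
  proof (cases "ev k < t")
    case True
    hence "ev (Suc k) \<le> t" using evS t by blast
    thus ?thesis using lt by simp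
  next
    case False
    thus ?thesis using le by (intro exI[of _ k]) simp
  qed
qed

lemma present_None: "leave u = None \<Longrightarrow> present leave u t"
  by (simp add: present_def)

lemma step_cases:
  "step n r c f g leave t S u = S u \<or>
   (present leave u t \<and> adj n r c (S u) (step n r c f g leave t S u) \<and>
    at_link c f g (S u) (step n r c f g leave t S u) t \<and>
    (\<forall>v<n. present leave v t \<longrightarrow> S v \<noteq> step n r c f g leave t S u))"
proof (cases "present leave u t \<and> (\<exists>j. adj n r c (S u) j \<and> at_link c f g (S u) j t \<and>
                               (\<forall>v<n. present leave v t \<longrightarrow> S v \<noteq> j))")
  case True
  let ?P = "\<lambda>j. adj n r c (S u) j \<and> at_link c f g (S u) j t \<and> (\<forall>v<n. present leave v t \<longrightarrow> S v \<noteq> j)"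
  have eq: "step n r c f g leave t S u = (SOME j. ?P j)" unfolding step_def by (simp only: if_P[OF True])
  have ex: "\<exists>j. ?P j" using True by blast
  have "?P (SOME j. ?P j)" using ex by (rule someI_ex)
  thus ?thesis using eq True by simp
next
  case False
  hence "step n r c f g leave t S u = S u" unfolding step_def by (simp only: if_not_P[OF False] if_False)
  thus ?thesis by simp
qed

lemma step_nolink: "\<not> (\<exists>j. adj n r c (S u) j \<and> at_link c f g (S u) j t) \<Longrightarrow> step n r c f g leave t S u = S u"
proof -
  assume a: "\<not> (\<exists>j. adj n r c (S u) j \<and> at_link c f g (S u) j t)"
  have "\<not> (present leave u t \<and> (\<exists>j. adj n r c (S u) j \<and> at_link c f g (S u) j t \<and>
                               (\<forall>v<n. present leave v t \<longrightarrow> S v \<noteq> j)))" using a by blast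
  thus ?thesis unfolding step_def by (simp only: if_not_P if_False)
qed

lemma step_move:
  assumes "present leave u t" "adj n r c (S u) j" "at_link c f g (S u) j t"
    "\<forall>v<n. present leave v t \<longrightarrow> S v \<noteq> j"
  shows "step n r c f g leave t S u = j"
proof -
  let ?P = "\<lambda>j. adj n r c (S u) j \<and> at_link c f g (S u) j t \<and> (\<forall>v<n. present leave v t \<longrightarrow> S v \<noteq> j)"
  have ex: "\<exists>j. ?P j" using assms by blast
  have cnd: "present leave u t \<and> (\<exists>j. ?P j)" using ex assms(1) by blast
  have eq: "step n r c f g leave t S u = (SOME j. ?P j)" unfolding step_def by (simp only: if_P[OF cnd])
  have p: "?P (SOME j. ?P j)" using ex by (rule someI_ex)
  show ?thesis
  proof (rule ccontr)
    assume "step n r c f g leave t S u \<noteq> j"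
    hence "(SOME j. ?P j) \<noteq> j" using eq by simp
    thus False using excl[OF assms(2) _ _ assms(3), of "SOME j. ?P j"] p by blast
  qed
qed

lemma config_Suc: "config n r c f g leave (Suc k) u = step n r c f g leave (ev k) (config n r c f g leave k) u"
  by simp

lemma config_lt: "u < n \<Longrightarrow> config n r c f g leave k u < n"
proof (induction k)
  case 0
  thus ?case by simp
next
  case (Suc k)
  have "config n r c f g leave (Suc k) u = config n r c f g leave k u \<or>
        adj n r c (config n r c f g leave k u) (config n r c f g leave (Suc k) u)"
    using step_cases[of leave "ev k" "config n r c f g leave k" u] unfolding config_Suc by blast
  thus ?case using Suc.IH Suc.prems adjD by auto
qed

context
  fixes leave :: "nat \<Rightarrow> real option" and A B :: nat
  assumes AB: "A < n" "B < n" "A \<noteq> B" "leave A = None" "leave B = None"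
begin

lemma distinct_AB: "config n r c f g leave k A \<noteq> config n r c f g leave k B"
proof (induction k)
  case 0
  thus ?case using AB by simp
next
  case (Suc k)
  define S where "S = config n r c f g leave k"
  define t where "t = ev k"
  define a where "a = step n r c f g leave t S A"
  define b where "b = step n r c f g leave t S B"
  have ca: "config n r c f g leave (Suc k) A = a" unfolding a_def S_def t_def by simp
  have cb: "config n r c f g leave (Suc k) B = b" unfolding b_def S_def t_def by simp
  have ne: "S A \<noteq> S B" using Suc S_def by simp
  have pA: "present leave A t" "present leave B t" using AB present_None by auto
  have hA: "a = S A \<or> (adj n r c (S A) a \<and> at_link c f g (S A) a t \<and> (\<forall>v<n. present leave v t \<longrightarrow> S v \<noteq> a))"
    unfolding a_def using step_cases by blast
  have hB: "b = S B \<or> (adj n r c (S B) b \<and> at_link c f g (S B) b t \<and> (\<forall>v<n. present leave v t \<longrightarrow> S v \<noteq> b))"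
    unfolding b_def using step_cases by blast
  have "a \<noteq> b"
  proof
    assume ab: "a = b"
    show False
    proof (cases "a = S A")
      case True
      show False
      proof (cases "b = S B")
        case True
        thus False using \<open>a = S A\<close> ab ne by simp
      next
        case False
        hence "S A \<noteq> b" using hB pA AB by blast
        thus False using True ab by simp
      qed
    next
      case False
      hence mA: "adj n r c (S A) a \<and> at_link c f g (S A) a t \<and> (\<forall>v<n. present leave v t \<longrightarrow> S v \<noteq> a)"
        using hA by blast
      show False
      proof (cases "b = S B")
        case True
        thus False using mA ab pA AB by blast
      next
        case False
        hence mB: "adj n r c (S B) b \<and> at_link c f g (S B) b t" using hB by blast
        have "adj n r c a (S A)" "adj n r c a (S B)" using mA mB ab adj_sym by auto
        moreover have "at_link c f g a (S A) t" "at_link c f g a (S B) t"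
          using mA mB ab sync by auto
        ultimately show False using excl ne by blast
      qed
    qed
  qed
  thus ?case using ca cb by simp
qed

lemma order_AB:
  assumes "\<sigma> (config n r c f g leave k A) < \<sigma> (config n r c f g leave k B)"
  shows "\<sigma> (config n r c f g leave (Suc k) A) < \<sigma> (config n r c f g leave (Suc k) B)"
proof -
  define S where "S = config n r c f g leave k"
  define t where "t = ev k"
  define a where "a = step n r c f g leave t S A"
  define b where "b = step n r c f g leave t S B"
  have ca: "config n r c f g leave (Suc k) A = a" unfolding a_def S_def t_def by simp
  have cb: "config n r c f g leave (Suc k) B = b" unfolding b_def S_def t_def by simp
  have lt: "S A < n" "S B < n" "a < n" "b < n"
    using config_lt[OF AB(1), of leave k] config_lt[OF AB(2), of leave k]
      config_lt[OF AB(1), of leave "Suc k"] config_lt[OF AB(2), of leave "Suc k"] ca cb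
    unfolding S_def by auto
  have pB: "present leave B t" using AB present_None by auto
  have hA: "a = S A \<or> (adj n r c (S A) a \<and> (\<forall>v<n. present leave v t \<longrightarrow> S v \<noteq> a))"
    unfolding a_def using step_cases by blast
  have hB: "b = S B \<or> adj n r c (S B) b"
    unfolding b_def using step_cases by blast
  have dA: "\<sigma> a = \<sigma> (S A) \<or> \<sigma> a = Suc (\<sigma> (S A)) \<or> \<sigma> (S A) = Suc (\<sigma> a)"
    using hA adj_iff lt by auto
  have dB: "\<sigma> b = \<sigma> (S B) \<or> \<sigma> b = Suc (\<sigma> (S B)) \<or> \<sigma> (S B) = Suc (\<sigma> b)"
    using hB adj_iff lt by auto
  have nab: "\<sigma> a \<noteq> \<sigma> b" using distinct_AB[of "Suc k"] ca cb sig_inj lt by auto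
  have o: "\<sigma> (S A) < \<sigma> (S B)" using assms S_def by simp
  have "\<sigma> a < \<sigma> b"
  proof (rule ccontr)
    assume "\<not> \<sigma> a < \<sigma> b"
    hence "\<sigma> a = Suc (\<sigma> (S A)) \<and> \<sigma> a = \<sigma> (S B)" using dA dB nab o
      by (elim disjE) linarith+
    hence "a = S B" "a \<noteq> S A" using sig_inj lt by auto
    thus False using hA pB AB by blast
  qed
  thus ?thesis using ca cb by simp
qed

lemma order_AB_from:
  assumes "\<sigma> (config n r c f g leave K A) < \<sigma> (config n r c f g leave K B)" "K \<le> k"
  shows "\<sigma> (config n r c f g leave k A) < \<sigma> (config n r c f g leave k B)"
  using assms(2)
proof (induction k)
  case 0
  thus ?case using assms(1) by simp
next
  case (Suc k)
  show ?case
  proof (cases "K = Suc k")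
    case True
    thus ?thesis using assms(1) by simp
  next
    case False
    hence "K \<le> k" using Suc by simp
    thus ?thesis using Suc order_AB by blast
  qed
qed

end

declare config.simps(2) [simp del] ev_time.simps(2) [simp del]

context
  fixes leave :: "nat \<Rightarrow> real option" and u K :: nat
  assumes U: "u < n" "leave u = None" "starves_from n r c f g leave K u"
begin

lemma ub_move:
  assumes h: "K \<le> k" "adj n r c (config n r c f g leave k u) j"
    "at_link c f g (config n r c f g leave k u) j (ev k)"
  shows "config n r c f g leave (Suc k) u = j"
proof -
  have e: "\<forall>v<n. present leave v (ev k) \<longrightarrow> config n r c f g leave k v \<noteq> j"
    using U(3) h unfolding starves_from_def by blast
  show ?thesis unfolding config_Suc by (rule step_move[where leave=leave and u=u and t="ev k" and S="config n r c f g leave k" and j=j, OF present_None[of leave u, OF U(2)] h(2) h(3) e])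
qed

lemma ub_stay:
  assumes "\<not> (\<exists>j. adj n r c (config n r c f g leave k u) j \<and> at_link c f g (config n r c f g leave k u) j (ev k))"
  shows "config n r c f g leave (Suc k) u = config n r c f g leave k u"
  unfolding config_Suc by (rule step_nolink[where leave=leave and u=u and t="ev k" and S="config n r c f g leave k", OF assms])

lemma first_link:
  assumes "K \<le> k0" "config n r c f g leave k0 u = i" "k0 \<le> k1" "adj n r c i j1" "at_link c f g i j1 (ev k1)"
  shows "\<exists>k. k0 \<le> k \<and> k \<le> k1 \<and> (\<exists>j. config n r c f g leave k u = i \<and> config n r c f g leave (Suc k) u = j
            \<and> adj n r c i j \<and> at_link c f g i j (ev k))"
proof -
  define P where "P k \<longleftrightarrow> k0 \<le> k \<and> (\<exists>j. adj n r c i j \<and> at_link c f g i j (ev k))" for k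
  have P1: "P k1" using assms unfolding P_def by blast
  define km where "km = (LEAST k. P k)"
  have Pkm: "P km" unfolding km_def using P1 by (rule LeastI)
  have le: "km \<le> k1" unfolding km_def using P1 by (rule Least_le)
  have notP: "\<not> P k" if "k < km" for k using that unfolding km_def by (rule not_less_Least)
  have stay: "config n r c f g leave (k0 + d) u = i" if "k0 + d \<le> km" for d
    using that
  proof (induction d)
    case 0
    thus ?case using assms(2) by simp
  next
    case (Suc d)
    have lt: "k0 + d < km" using Suc.prems by simp
    hence ih: "config n r c f g leave (k0 + d) u = i" using Suc.IH by simp
    have "\<not> P (k0 + d)" using notP lt by blast
    hence "\<not> (\<exists>j. adj n r c i j \<and> at_link c f g i j (ev (k0 + d)))"
      unfolding P_def by simp
    hence "\<not> (\<exists>j. adj n r c (config n r c f g leave (k0 + d) u) j \<and>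
                 at_link c f g (config n r c f g leave (k0 + d) u) j (ev (k0 + d)))"
      by (simp only: ih) simp
    hence "config n r c f g leave (Suc (k0 + d)) u = config n r c f g leave (k0 + d) u" by (rule ub_stay)
    thus ?case using ih by simp
  qed
  have k0km: "k0 \<le> km" using Pkm P_def by simp
  have ci: "config n r c f g leave km u = i" using stay[of "km - k0"] k0km by simp
  obtain j where j: "adj n r c i j" "at_link c f g i j (ev km)" using Pkm P_def by blast
  have "config n r c f g leave (Suc km) u = j" by (rule ub_move) (use assms(1) k0km ci j in auto)
  thus ?thesis using ci j k0km le by blast
qed

lemma cont:
  assumes a: "config n r c f g leave k u = q" "config n r c f g leave (Suc k) u = i"
    "adj n r c q i" "at_link c f g q i (ev k)"
    and b: "K \<le> k" "adj n r c i j" "j \<noteq> q \<or> (\<forall>j'. adj n r c i j' \<longrightarrow> j' = q)"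
  shows "\<exists>k'>k. config n r c f g leave k' u = i \<and> config n r c f g leave (Suc k') u = j
            \<and> adj n r c i j \<and> at_link c f g i j (ev k')"
proof -
  define t where "t = ev k"
  have aq: "adj n r c i q" using a(3) adj_sym by blast
  have lq: "at_link c f g i q t" using a(3,4) sync t_def by blast
  have lq1: "at_link c f g i q (t+1)" using link_shift[OF aq lq] .
  obtain s where s: "t < s" "s \<le> t + 1" "at_link c f g i j s" "j \<noteq> q \<longrightarrow> s < t + 1"
  proof (cases "j = q")
    case True
    thus ?thesis using that[of "t+1"] lq1 by simp
  next
    case False
    obtain s where s: "t < s" "s \<le> t+1" "at_link c f g i j s" using link_next[OF b(2)] by blast
    have "s \<noteq> t + 1" using excl[OF b(2) aq False] s lq1 by blast
    thus ?thesis using that[of s] s by simp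
  qed
  have t0: "0 \<le> t" using ev_nonneg t_def by simp
  have sE: "s \<in> E" unfolding event_times_def using s b(2) t0 by auto
  obtain k1 where k1: "ev k1 = s" using ev_surj[OF sE] by blast
  have kk1: "k < k1" using k1 s(1) t_def ev_less_iff by blast
  have "\<exists>k'. Suc k \<le> k' \<and> k' \<le> k1 \<and> (\<exists>j'. config n r c f g leave k' u = i \<and> config n r c f g leave (Suc k') u = j'
            \<and> adj n r c i j' \<and> at_link c f g i j' (ev k'))"
  proof -
    have f1: "K \<le> Suc k" using b(1) by simp
    have f3: "Suc k \<le> k1" using kk1 by simp
    have f5: "at_link c f g i j (ev k1)" using s(3) k1 by simp
    show ?thesis by (rule first_link[OF f1 a(2) f3 b(2) f5])
  qed
  then obtain k' j' where k': "Suc k \<le> k'" "k' \<le> k1" "config n r c f g leave k' u = i"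
    "config n r c f g leave (Suc k') u = j'" "adj n r c i j'" "at_link c f g i j' (ev k')" by blast
  have tk1: "t < ev k'" using k'(1) ev_less_iff t_def by simp
  have tk2: "ev k' \<le> s" using k'(2) ev_le_iff k1 by blast
  have "j' = j"
  proof (cases "j' = q")
    case True
    have "ev k' - t \<in> \<int>" using link_diff[OF aq] k'(6) True lq by auto
    then obtain m :: int where m: "ev k' - t = of_int m" by (auto elim: Ints_cases)
    have "0 < m" "m \<le> 1" using m tk1 tk2 s(2) by linarith+
    hence "m = 1" by simp
    hence "ev k' = t + 1" using m by simp
    hence "s = t + 1" using tk2 s(2) by simp
    hence "j = q" using s(4) by auto
    thus ?thesis using True by simp
  next
    case False
    show ?thesis
    proof (cases "j = q")
      case True
      thus ?thesis using b(3) k'(5) False by blast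
    next
      case False2: False
      show ?thesis using degree[OF aq k'(5) b(2)] False False2 by auto
    qed
  qed
  thus ?thesis using k' by (intro exI[of _ k']) auto
qed

lemma right_aux:
  "\<forall>k q i. config n r c f g leave k u = q \<and> config n r c f g leave (Suc k) u = i \<and>
      adj n r c q i \<and> at_link c f g q i (ev k) \<and> K \<le> k \<and> \<sigma> i = Suc (\<sigma> q) \<and> n - 1 - \<sigma> i = d
      \<longrightarrow> (\<exists>k'\<ge>k. \<sigma> (config n r c f g leave k' u) = n - 1)"
proof (induction d)
  case 0
  show ?case
  proof (intro allI impI)
    fix k q i
    assume h: "config n r c f g leave k u = q \<and> config n r c f g leave (Suc k) u = i \<and>
      adj n r c q i \<and> at_link c f g q i (ev k) \<and> K \<le> k \<and> \<sigma> i = Suc (\<sigma> q) \<and> n - 1 - \<sigma> i = 0"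
    have "adj n r c q i" using h by blast
    hence "i < n" using adjD by blast
    hence "\<sigma> i < n" by (rule sig_lt)
    moreover have "n - 1 - \<sigma> i = 0" using h by blast
    ultimately have e: "\<sigma> i = n - 1" by linarith
    have "config n r c f g leave (Suc k) u = i" using h by blast
    thus "\<exists>k'\<ge>k. \<sigma> (config n r c f g leave k' u) = n - 1" using e by (intro exI[of _ "Suc k"]) simp
  qed
next
  case (Suc d)
  show ?case
  proof (intro allI impI)
    fix k q i
    assume h: "config n r c f g leave k u = q \<and> config n r c f g leave (Suc k) u = i \<and>
      adj n r c q i \<and> at_link c f g q i (ev k) \<and> K \<le> k \<and> \<sigma> i = Suc (\<sigma> q) \<and> n - 1 - \<sigma> i = Suc d"
    have hh: "config n r c f g leave k u = q" "config n r c f g leave (Suc k) u = i"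
      "adj n r c q i" "at_link c f g q i (ev k)" "K \<le> k" using h by auto
    have lt: "i < n" "q < n" using hh(3) adjD by blast+
    have d1: "n - 1 - \<sigma> i = Suc d" "\<sigma> i = Suc (\<sigma> q)" using h by blast+
    hence "Suc (\<sigma> i) < n" by linarith
    then obtain j where j: "j < n" "\<sigma> j = Suc (\<sigma> i)" using sig_surj by blast
    have aj: "adj n r c i j" using adj_iff lt j by simp
    have "j \<noteq> q" using j d1 by auto
    then obtain k' where k': "k' > k" "config n r c f g leave k' u = i" "config n r c f g leave (Suc k') u = j"
      "adj n r c i j" "at_link c f g i j (ev k')"
      using cont[OF hh(1-4) hh(5) aj disjI1[OF \<open>j \<noteq> q\<close>]] by blast
    have pre: "config n r c f g leave k' u = i \<and> config n r c f g leave (Suc k') u = j \<and>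
      adj n r c i j \<and> at_link c f g i j (ev k') \<and> K \<le> k' \<and> \<sigma> j = Suc (\<sigma> i) \<and> n - 1 - \<sigma> j = d"
      using k' hh(5) j(2) d1 by auto
    have "\<exists>k''\<ge>k'. \<sigma> (config n r c f g leave k'' u) = n - 1"
      using Suc.IH[rule_format, OF pre] .
    thus "\<exists>k'\<ge>k. \<sigma> (config n r c f g leave k' u) = n - 1" using k'(1) by (meson le_trans less_imp_le)
  qed
qed

lemma left_aux:
  "\<forall>k q i. config n r c f g leave k u = q \<and> config n r c f g leave (Suc k) u = i \<and>
      adj n r c q i \<and> at_link c f g q i (ev k) \<and> K \<le> k \<and> \<sigma> q = Suc (\<sigma> i) \<and> \<sigma> i = d
      \<longrightarrow> (\<exists>k' q' i'. config n r c f g leave k' u = q' \<and> config n r c f g leave (Suc k') u = i' \<and>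
      adj n r c q' i' \<and> at_link c f g q' i' (ev k') \<and> K \<le> k' \<and> \<sigma> i' = 0 \<and> \<sigma> q' = 1)"
proof (induction d)
  case 0
  show ?case
  proof (intro allI impI)
    fix k q i
    assume h: "config n r c f g leave k u = q \<and> config n r c f g leave (Suc k) u = i \<and>
      adj n r c q i \<and> at_link c f g q i (ev k) \<and> K \<le> k \<and> \<sigma> q = Suc (\<sigma> i) \<and> \<sigma> i = 0"
    hence "\<sigma> q = 1" by simp
    thus "\<exists>k' q' i'. config n r c f g leave k' u = q' \<and> config n r c f g leave (Suc k') u = i' \<and>
      adj n r c q' i' \<and> at_link c f g q' i' (ev k') \<and> K \<le> k' \<and> \<sigma> i' = 0 \<and> \<sigma> q' = 1"
      using h by blast
  qed
next
  case (Suc d)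
  show ?case
  proof (intro allI impI)
    fix k q i
    assume h: "config n r c f g leave k u = q \<and> config n r c f g leave (Suc k) u = i \<and>
      adj n r c q i \<and> at_link c f g q i (ev k) \<and> K \<le> k \<and> \<sigma> q = Suc (\<sigma> i) \<and> \<sigma> i = Suc d"
    have hh: "config n r c f g leave k u = q" "config n r c f g leave (Suc k) u = i"
      "adj n r c q i" "at_link c f g q i (ev k)" "K \<le> k" using h by auto
    have lt: "i < n" "q < n" using hh(3) adjD by blast+
    have d1: "\<sigma> i = Suc d" using h by blast
    hence "d < n" using sig_lt[OF lt(1)] by simp
    then obtain j where j: "j < n" "\<sigma> j = d" using sig_surj by blast
    have aj: "adj n r c i j" using adj_iff lt j d1 by simp
    have "\<sigma> q = Suc (\<sigma> i)" using h by blast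
    hence "j \<noteq> q" using j d1 by auto
    then obtain k' where k': "k' > k" "config n r c f g leave k' u = i" "config n r c f g leave (Suc k') u = j"
      "adj n r c i j" "at_link c f g i j (ev k')"
      using cont[OF hh(1-4) hh(5) aj disjI1[OF \<open>j \<noteq> q\<close>]] by blast
    have pre: "config n r c f g leave k' u = i \<and> config n r c f g leave (Suc k') u = j \<and>
      adj n r c i j \<and> at_link c f g i j (ev k') \<and> K \<le> k' \<and> \<sigma> i = Suc (\<sigma> j) \<and> \<sigma> j = d"
      using k' hh(5) j(2) d1 by auto
    show "\<exists>k' q' i'. config n r c f g leave k' u = q' \<and> config n r c f g leave (Suc k') u = i' \<and>
      adj n r c q' i' \<and> at_link c f g q' i' (ev k') \<and> K \<le> k' \<and> \<sigma> i' = 0 \<and> \<sigma> q' = 1"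
      using Suc.IH[rule_format, OF pre] .
  qed
qed

lemma start:
  "\<exists>k q i. config n r c f g leave k u = q \<and> config n r c f g leave (Suc k) u = i \<and>
      adj n r c q i \<and> at_link c f g q i (ev k) \<and> K \<le> k"
proof -
  define i0 where "i0 = config n r c f g leave K u"
  have i0n: "i0 < n" unfolding i0_def using config_lt U(1) by blast
  define p where "p = (if \<sigma> i0 = 0 then 1 else \<sigma> i0 - 1)"
  have "p < n" unfolding p_def using n2 sig_lt[OF i0n] by auto
  then obtain j0 where j0: "j0 < n" "\<sigma> j0 = p" using sig_surj by blast
  have aj: "adj n r c i0 j0" using adj_iff[OF i0n j0(1)] j0(2) unfolding p_def by auto
  obtain s where s: "ev K < s" "at_link c f g i0 j0 s" using link_next[OF aj] by blast
  have "0 \<le> s" using s ev_nonneg[of K] by linarith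
  hence sE: "s \<in> E" unfolding event_times_def using s aj by auto
  obtain k1 where k1: "ev k1 = s" using ev_surj[OF sE] by blast
  have kk1: "K \<le> k1" using k1 s(1) ev_less_iff[of K k1] by simp
  have "\<exists>k. K \<le> k \<and> k \<le> k1 \<and> (\<exists>j. config n r c f g leave k u = i0 \<and> config n r c f g leave (Suc k) u = j
            \<and> adj n r c i0 j \<and> at_link c f g i0 j (ev k))"
  proof -
    have f2: "config n r c f g leave K u = i0" using i0_def by simp
    have f5: "at_link c f g i0 j0 (ev k1)" using s(2) k1 by simp
    show ?thesis by (rule first_link[OF order_refl f2 kk1 aj f5])
  qed
  thus ?thesis by blast
qed

lemma reach: "\<exists>k\<ge>K. \<sigma> (config n r c f g leave k u) = n - 1"
proof -
  obtain k q i where h: "config n r c f g leave k u = q" "config n r c f g leave (Suc k) u = i"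
      "adj n r c q i" "at_link c f g q i (ev k)" "K \<le> k"
    using start by blast
  have lt: "q < n" "i < n" using h adjD by blast+
  have "\<sigma> q = Suc (\<sigma> i) \<or> \<sigma> i = Suc (\<sigma> q)" using adj_iff[OF lt] h(3) by blast
  thus ?thesis
  proof
    assume "\<sigma> i = Suc (\<sigma> q)"
    hence pre: "config n r c f g leave k u = q \<and> config n r c f g leave (Suc k) u = i \<and>
      adj n r c q i \<and> at_link c f g q i (ev k) \<and> K \<le> k \<and> \<sigma> i = Suc (\<sigma> q) \<and> n - 1 - \<sigma> i = n - 1 - \<sigma> i"
      using h by blast
    have "\<exists>k'\<ge>k. \<sigma> (config n r c f g leave k' u) = n - 1" using right_aux[rule_format, OF pre] .
    thus ?thesis using h(5) by (meson le_trans)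
  next
    assume "\<sigma> q = Suc (\<sigma> i)"
    hence pre: "config n r c f g leave k u = q \<and> config n r c f g leave (Suc k) u = i \<and>
      adj n r c q i \<and> at_link c f g q i (ev k) \<and> K \<le> k \<and> \<sigma> q = Suc (\<sigma> i) \<and> \<sigma> i = \<sigma> i"
      using h by blast
    obtain k' q' i' where h': "config n r c f g leave k' u = q'" "config n r c f g leave (Suc k') u = i'"
      "adj n r c q' i'" "at_link c f g q' i' (ev k')" "K \<le> k'" "\<sigma> i' = 0" "\<sigma> q' = 1"
      using left_aux[rule_format, OF pre] by blast
    have lt': "q' < n" "i' < n" using h' adjD by blast+
    have only: "\<forall>j'. adj n r c i' j' \<longrightarrow> j' = q'"
    proof (intro allI impI)
      fix j' assume "adj n r c i' j'"
      hence jn: "j' < n" using adjD by blast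
      have "\<sigma> i' = Suc (\<sigma> j') \<or> \<sigma> j' = Suc (\<sigma> i')" using adj_iff[OF lt'(2) jn] \<open>adj n r c i' j'\<close> by blast
      hence "\<sigma> j' = 1" using h'(6) by simp
      thus "j' = q'" using sig_inj[OF jn lt'(1)] h'(7) by simp
    qed
    obtain k'' where k'': "k'' > k'" "config n r c f g leave k'' u = i'" "config n r c f g leave (Suc k'') u = q'"
      "adj n r c i' q'" "at_link c f g i' q' (ev k'')"
      using cont[OF h'(1-4) h'(5) adj_sym[OF h'(3)] disjI2[OF only]] by blast
    have pre2: "config n r c f g leave k'' u = i' \<and> config n r c f g leave (Suc k'') u = q' \<and>
      adj n r c i' q' \<and> at_link c f g i' q' (ev k'') \<and> K \<le> k'' \<and> \<sigma> q' = Suc (\<sigma> i') \<and> n - 1 - \<sigma> q' = n - 1 - \<sigma> q'"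
      using k'' h' by auto
    have "\<exists>k3\<ge>k''. \<sigma> (config n r c f g leave k3 u) = n - 1"
      using right_aux[rule_format, OF pre2] .
    thus ?thesis using k''(1) h'(5) by (meson le_trans less_imp_le)
  qed
qed

end

lemma res_n2: "resilient_for n r c f g (n - 2)"
  unfolding resilient_for_def
proof (intro allI impI)
  fix leave :: "nat \<Rightarrow> real option"
  assume h: "(\<forall>u. leave u \<noteq> None \<longrightarrow> u < n) \<and> card {u. leave u \<noteq> None} = n - 2"
  define L where "L = {u. leave u \<noteq> None}"
  have Ls: "L \<subseteq> {..<n}" using h L_def by auto
  have cL: "card L = n - 2" using h L_def by simp
  have "card ({..<n} - L) = 2" using Ls cL n2 by (simp add: card_Diff_subset finite_subset)
  then obtain A B where AB: "{..<n} - L = {A, B}" "A \<noteq> B" by (auto simp: card_2_iff)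
  have ab: "A < n" "B < n" "leave A = None" "leave B = None" using AB(1) unfolding L_def by blast+
  show "\<not> starvation n r c f g leave"
  proof
    assume "starvation n r c f g leave"
    then obtain K where K: "\<forall>u<n. leave u = None \<longrightarrow> starves_from n r c f g leave K u"
      unfolding starvation_def by blast
    have sA: "starves_from n r c f g leave K A" and sB: "starves_from n r c f g leave K B"
      using K ab by auto
    have ltA: "config n r c f g leave k A < n" and ltB: "config n r c f g leave k B < n" for k
      using config_lt ab by auto
    have ne: "\<sigma> (config n r c f g leave K A) \<noteq> \<sigma> (config n r c f g leave K B)"
      using distinct_AB[OF ab(1,2) AB(2) ab(3,4), of K] sig_inj[OF ltA ltB] by blast
    show False
    proof (cases "\<sigma> (config n r c f g leave K A) < \<sigma> (config n r c f g leave K B)")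
      case True
      obtain k where k: "K \<le> k" "\<sigma> (config n r c f g leave k A) = n - 1"
        using reach[OF ab(1) ab(3) sA] by blast
      have "\<sigma> (config n r c f g leave k A) < \<sigma> (config n r c f g leave k B)"
        using order_AB_from[OF ab(1,2) AB(2) ab(3,4) True k(1)] .
      moreover have "\<sigma> (config n r c f g leave k B) < n" using sig_lt[OF ltB] .
      ultimately show False using k(2) by simp
    next
      case False
      hence lt: "\<sigma> (config n r c f g leave K B) < \<sigma> (config n r c f g leave K A)" using ne by simp
      obtain k where k: "K \<le> k" "\<sigma> (config n r c f g leave k B) = n - 1"
        using reach[OF ab(2) ab(4) sB] by blast
      have "\<sigma> (config n r c f g leave k B) < \<sigma> (config n r c f g leave k A)"
        using order_AB_from[OF ab(2,1) AB(2)[symmetric] ab(4,3) lt k(1)] .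
      moreover have "\<sigma> (config n r c f g leave k A) < n" using sig_lt[OF ltA] .
      ultimately show False using k(2) by simp
    qed
  qed
qed

lemma not_res_n1: "\<not> resilient_for n r c f g (n - 1)"
proof -
  define leave :: "nat \<Rightarrow> real option" where "leave = (\<lambda>u. if u < n \<and> u \<noteq> 0 then Some (-1) else None)"
  have s: "{u. leave u \<noteq> None} = {1..<n}" unfolding leave_def by auto
  have c1: "(\<forall>u. leave u \<noteq> None \<longrightarrow> u < n) \<and> card {u. leave u \<noteq> None} = n - 1"
    unfolding s by (auto simp: leave_def)
  have "starves_from n r c f g leave 0 0"
    unfolding starves_from_def
  proof (intro allI impI)
    fix k j v
    assume a: "0 \<le> k" "adj n r c (config n r c f g leave k 0) j \<and>
        at_link c f g (config n r c f g leave k 0) j (ev k)" "v < n" "present leave v (ev k)"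
    have "v = 0"
    proof (rule ccontr)
      assume "v \<noteq> 0"
      hence "leave v = Some (-1)" using a(3) leave_def by simp
      hence "ev k < -1" using a(4) by (simp add: present_def)
      thus False using ev_nonneg[of k] by simp
    qed
    thus "config n r c f g leave k v \<noteq> j" using a(2) adjD by blast
  qed
  hence "starvation n r c f g leave" unfolding starvation_def
    by (intro exI[of _ 0]) (auto simp: leave_def)
  thus ?thesis using c1 unfolding resilient_for_def by blast
qed

lemma not_res_n: "\<not> resilient_for n r c f g n"
proof -
  define leave :: "nat \<Rightarrow> real option" where "leave = (\<lambda>u. if u < n then Some 0 else None)"
  have s: "{u. leave u \<noteq> None} = {..<n}" unfolding leave_def by auto
  have c1: "(\<forall>u. leave u \<noteq> None \<longrightarrow> u < n) \<and> card {u. leave u \<noteq> None} = n"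
    unfolding s by (auto simp: leave_def)
  have "starvation n r c f g leave" unfolding starvation_def leave_def by simp
  thus ?thesis using c1 unfolding resilient_for_def by blast
qed

lemma iso_res: "isolation_resilience n r c f g = n - 2"
  unfolding isolation_resilience_def
proof (rule Greatest_equality)
  show "n - 2 \<le> n \<and> resilient_for n r c f g (n - 2)" using res_n2 by simp
next
  fix y assume y: "y \<le> n \<and> resilient_for n r c f g y"
  show "y \<le> n - 2"
  proof (rule ccontr)
    assume "\<not> y \<le> n - 2"
    hence "y = n - 1 \<or> y = n" using y n2 by auto
    thus False using y not_res_n1 not_res_n by auto
  qed
qed

end

theorem lemma21:
  fixes n :: nat and r :: real and c :: "nat \<Rightarrow> complex"
    and f :: "nat \<Rightarrow> real" and g :: "nat \<Rightarrow> int"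
  assumes "n \<ge> 2"
    and "valid_system n r c"
    and "sync_schedule n r c f g"
    and "is_path_graph n r c"
  shows "isolation_resilience n r c f g = n - 2"
proof -
  obtain \<sigma> where s: "bij_betw \<sigma> {..<n} {..<n}"
    "\<forall>i<n. \<forall>j<n. adj n r c i j \<longleftrightarrow> (\<sigma> i = Suc (\<sigma> j) \<or> \<sigma> j = Suc (\<sigma> i))"
    using assms(4) unfolding is_path_graph_def by blast
  interpret PS n r c f g \<sigma>
    using assms(1,2,3) s by unfold_locales auto
  show ?thesis by (rule iso_res)
qed

end
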